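(* Let $n$ training samples carry labels in $\{1,\dots,K\}$ with indicator matrix $F\in\mathbb{R}^{K\times n}$, $n_k$ samples in class $k$. Let the basis $G_1,\dots,G_r$ ($r\le n$) be a subset of the training samples, with $r_k\ge1$ basis vectors in class $k$, and let $F_{G_i}$ be the class indicator of $G_i$. Let $W\in\mathbb{R}^{r\times n}$ be entrywise nonnegative with positive column sums, $S=\operatorname{diag}(\mathbf{1}^TW)$, $\tilde W=WS^{-1}$ of full row rank, $X^*=F\tilde W^T(\tilde W\tilde W^T)^{-1}$, and assume $F\tilde W^T\neq0$. Define the fitting error $\epsilon=\|F-X^*\tilde W\|_F^2/\|X^*\tilde W\|_F^2+1$ and the spectral risk $\gamma=\|X^*\|_F^2\|\tilde W\|_F^2/\|X^*\tilde W\|_F^2$. If $W_{ij}=0$ whenever $F_{G_i}\neq F_j$ (ideal bipartite-graph condition), then $\epsilon=1$ and $$\frac{r}{n}\sum_{k=1}^K\frac{n_k}{r_k}\le\gamma\le r.$$ The upper bound is attained when every column of $\tilde W$ has exactly one nonzero entry; the lower bound is attained if and only if $r_k=1$ for all $k$.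
   Context: The columns of $F$ are standard basis vectors of $\mathbb{R}^K$: $F_j=e_k$ iff sample $j$ is in class $k$. $W_{ij}$ is the similarity between basis vector $G_i$ and training sample $j$; each column of $\tilde W$ sums to one. $X^*$ minimizes $\|F-X\tilde W\|_F^2$. *)

theory Defs
  imports "HOL-Analysis.Analysis"
begin

text \<open>Samples are indexed by a finite type 'n (n = CARD('n)), classes by 'k
(K = CARD('k)), basis vectors by 'r (r = CARD('r)). Matrices are
real^cols^rows, so a K x n matrix is real^'n^'k.\<close>

definition indicator_matrix :: "('n \<Rightarrow> 'k) \<Rightarrow> real^'n^'k" where
  "indicator_matrix lab = (\<chi> k j. if lab j = k then 1 else 0)"

definition col_sum_diag :: "real^'n^'r \<Rightarrow> real^'n^'n" where
  "col_sum_diag W = (\<chi> i j. if i = j then (\<Sum>l\<in>UNIV. W $ l $ j) else 0)"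

definition normalize_cols :: "real^'n^'r \<Rightarrow> real^'n^'r" where
  "normalize_cols W = W ** matrix_inv (col_sum_diag W)"

definition lsq_solution :: "real^'n^'k \<Rightarrow> real^'n^'r \<Rightarrow> real^'r^'k" where
  "lsq_solution F Wt = F ** transpose Wt ** matrix_inv (Wt ** transpose Wt)"

text \<open>Squared Frobenius norm: the norm on real^'a^'b is the Euclidean (Frobenius) norm.\<close>
definition frob2 :: "real^'a^'b \<Rightarrow> real" where
  "frob2 A = (norm A)\<^sup>2"

definition fitting_error :: "real^'n^'k \<Rightarrow> real^'n^'r \<Rightarrow> real" where
  "fitting_error F Wt = frob2 (F - lsq_solution F Wt ** Wt) / frob2 (lsq_solution F Wt ** Wt) + 1"

definition spectral_risk :: "real^'n^'k \<Rightarrow> real^'n^'r \<Rightarrow> real" where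
  "spectral_risk F Wt = frob2 (lsq_solution F Wt) * frob2 Wt / frob2 (lsq_solution F Wt ** Wt)"

end

theory Submission
  imports Defs
begin

lemma matrix_inv_eq:
  fixes A :: "'a::field^'n^'n"
  assumes "A ** B = mat 1" "B ** A = mat 1"
  shows "matrix_inv A = B"
proof -
  have ex: "\<exists>A'. A ** A' = mat 1 \<and> A' ** A = mat 1" using assms by blast
  have "A ** matrix_inv A = mat 1 \<and> matrix_inv A ** A = mat 1"
    unfolding matrix_inv_def by (rule someI_ex[OF ex])
  then have "matrix_inv A = matrix_inv A ** (A ** B)" using assms by (simp add: matrix_mul_rid)
  also have "\<dots> = B" using \<open>_ \<and> _\<close> by (simp add: matrix_mul_assoc matrix_mul_lid)
  finally show ?thesis .
qed

lemma matrix_inv_right: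
  fixes A :: "'a::field^'n^'n"
  assumes "invertible A"
  shows "A ** matrix_inv A = mat 1"
proof -
  have ex: "\<exists>A'. A ** A' = mat 1 \<and> A' ** A = mat 1" using assms by (simp add: invertible_def)
  show ?thesis unfolding matrix_inv_def using someI_ex[OF ex] by blast
qed

lemma norm_vec_sq: "(norm (x::'a::real_normed_vector^'n))^2 = (\<Sum>i\<in>UNIV. (norm (x$i))^2)"
  by (simp add: norm_vec_def L2_set_def sum_nonneg)

lemma frob2_eq: "frob2 (A::real^'n^'m) = (\<Sum>i\<in>UNIV. \<Sum>j\<in>UNIV. (A$i$j)^2)"
  by (simp add: frob2_def norm_vec_sq)

lemma diag_mult:
  "((\<chi> i j. if i = j then a j else 0) :: 'a::comm_ring_1^'n^'n) ** (\<chi> i j. if i = j then b j else 0)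
   = (\<chi> i j. if i = j then a j * b j else 0)"
proof -
  have "(\<Sum>k\<in>UNIV. (if i = k then a k else 0) * (if k = j then b j else 0)) = (if i = j then a j * b j else 0)" for i j :: 'n
  proof -
    have "(\<Sum>k\<in>UNIV. (if i = k then a k else 0) * (if k = j then b j else 0)) = (\<Sum>k\<in>UNIV. if k = i then (if i = j then a j * b j else 0) else 0)"
      by (rule sum.cong) auto
    then show ?thesis by simp
  qed
  then show ?thesis by (simp add: matrix_matrix_mult_def)
qed

lemma diag_inv:
  fixes W :: "real^'n^'r"
  assumes pos: "\<forall>j. (\<Sum>i\<in>UNIV. W $ i $ j) > 0"
  shows "normalize_cols W $ i $ j = W $ i $ j / (\<Sum>l\<in>UNIV. W $ l $ j)"
proof -
  define s where "s j = (\<Sum>l\<in>UNIV. W $ l $ j)" for j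
  define E :: "real^'n^'n" where "E = (\<chi> i j. if i = j then 1 / s j else 0)"
  have sD: "col_sum_diag W = (\<chi> i j. if i = j then s j else 0)"
    by (simp add: col_sum_diag_def s_def vec_eq_iff)
  have sp: "s j \<noteq> 0" for j using pos by (simp add: s_def) (metis less_irrefl)
  have 1: "col_sum_diag W ** E = mat 1"
    using sp unfolding sD E_def diag_mult by (simp add: mat_def vec_eq_iff)
  have 2: "E ** col_sum_diag W = mat 1"
    using sp unfolding sD E_def diag_mult by (simp add: mat_def vec_eq_iff)
  have "matrix_inv (col_sum_diag W) = E" by (rule matrix_inv_eq[OF 1 2])
  then show ?thesis
    by (simp add: normalize_cols_def E_def matrix_matrix_mult_def if_distrib s_def cong: if_cong)
qed

theorem theorem4:
  fixes lab :: "'n::finite \<Rightarrow> 'k::finite"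
    and g :: "'r::finite \<Rightarrow> 'n"
    and W :: "real^'n^'r"
  defines "F \<equiv> indicator_matrix lab"
    and "Wt \<equiv> normalize_cols W"
    and "nk \<equiv> (\<lambda>k. card {j. lab j = k})"
    and "rk \<equiv> (\<lambda>k. card {i. lab (g i) = k})"
  assumes basis_subset: "inj g"
    and rk_pos: "\<forall>k. rk k \<ge> 1"
    and W_nonneg: "\<forall>i j. W $ i $ j \<ge> 0"
    and W_colsum_pos: "\<forall>j. (\<Sum>i\<in>UNIV. W $ i $ j) > 0"
    and full_row_rank: "rank Wt = CARD('r)"
    and FWt_nonzero: "F ** transpose Wt \<noteq> 0"
    and ideal: "\<forall>i j. lab (g i) \<noteq> lab j \<longrightarrow> W $ i $ j = 0"
  shows "fitting_error F Wt = 1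
    \<and> real CARD('r) / real CARD('n) * (\<Sum>k\<in>UNIV. real (nk k) / real (rk k)) \<le> spectral_risk F Wt
    \<and> spectral_risk F Wt \<le> real CARD('r)
    \<and> ((\<forall>j. \<exists>!i. Wt $ i $ j \<noteq> 0) \<longrightarrow> spectral_risk F Wt = real CARD('r))
    \<and> (spectral_risk F Wt = real CARD('r) / real CARD('n) * (\<Sum>k\<in>UNIV. real (nk k) / real (rk k))
         \<longleftrightarrow> (\<forall>k. rk k = 1))"
proof -
  define s where "s j = (\<Sum>l\<in>UNIV. W $ l $ j)" for j
  have Wt_eq: "Wt $ i $ j = W $ i $ j / s j" for i j
    unfolding Wt_def s_def by (rule diag_inv[OF W_colsum_pos])
  have spos: "s j > 0" for j using W_colsum_pos by (simp add: s_def)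
  have Wt_nonneg: "Wt $ i $ j \<ge> 0" for i j using W_nonneg spos[of j] by (simp add: Wt_eq)
  have Wt_zero: "lab (g i) \<noteq> lab j \<Longrightarrow> Wt $ i $ j = 0" for i j using ideal by (simp add: Wt_eq)
  have Wt_sum: "(\<Sum>i\<in>UNIV. Wt $ i $ j) = 1" for j
  proof -
    have "(\<Sum>i\<in>UNIV. Wt $ i $ j) = (\<Sum>i\<in>UNIV. W $ i $ j) / s j"
      by (simp add: Wt_eq sum_divide_distrib)
    then show ?thesis using spos[of j] by (simp add: s_def)
  qed
  define A where "A j = {i. lab (g i) = lab j}" for j
  have Asum: "(\<Sum>i\<in>A j. Wt $ i $ j) = 1" for j
  proof -
    have "(\<Sum>i\<in>A j. Wt $ i $ j) = (\<Sum>i\<in>UNIV. Wt $ i $ j)"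
      by (rule sum.mono_neutral_left) (auto simp: A_def Wt_zero)
    then show ?thesis using Wt_sum by simp
  qed
  define P :: "real^'r^'k" where "P = indicator_matrix (lab \<circ> g)"
  have FP: "F = P ** Wt"
  proof -
    have "(\<Sum>i\<in>UNIV. (if lab (g i) = k then 1 else 0) * Wt $ i $ j) = (if lab j = k then 1 else 0)" for k j
    proof (cases "lab j = k")
      case True
      then have "(\<Sum>i\<in>UNIV. (if lab (g i) = k then 1 else 0) * Wt $ i $ j) = (\<Sum>i\<in>UNIV. Wt $ i $ j)"
        by (intro sum.cong) (auto simp: Wt_zero)
      then show ?thesis using True Wt_sum by simp
    next
      case False
      then show ?thesis by (auto simp: Wt_zero intro!: sum.neutral)
    qed
    then show ?thesis
      by (simp add: F_def P_def indicator_matrix_def matrix_matrix_mult_def vec_eq_iff)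
  qed
  have injT: "inj ((*v) (transpose Wt))"
    using full_row_rank by (simp add: full_rank_injective[symmetric] rank_transpose)
  define M where "M = Wt ** transpose Wt"
  have Minv: "invertible M"
  proof -
    have "\<forall>x. M *v x = 0 \<longrightarrow> x = 0"
    proof (intro allI impI)
      fix x assume "M *v x = 0"
      then have 0: "Wt *v (transpose Wt *v x) = 0" by (simp add: M_def matrix_vector_mul_assoc del: transpose_matrix_vector)
      have "inner (transpose Wt *v x) (transpose Wt *v x) = inner x (Wt *v (transpose Wt *v x))"
        by (metis dot_lmul_matrix transpose_matrix_vector)
      then have "transpose Wt *v x = 0" using 0 by simp
      then show "x = 0" using injT by (metis inj_eq matrix_vector_mult_0_right)
    qed
    then show ?thesis by (simp add: invertible_left_inverse matrix_left_invertible_ker)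
  qed
  have lsq: "lsq_solution F Wt = P"
  proof -
    have "lsq_solution F Wt = P ** (M ** matrix_inv M)"
      by (simp add: lsq_solution_def FP M_def matrix_mul_assoc)
    then show ?thesis using matrix_inv_right[OF Minv] by (simp add: matrix_mul_rid)
  qed
  have fit: "fitting_error F Wt = 1"
    by (simp add: fitting_error_def lsq FP[symmetric] frob2_def)
  have frobP: "frob2 P = real CARD('r)"
  proof -
    have "frob2 P = (\<Sum>i\<in>UNIV. \<Sum>k\<in>UNIV. (P $ k $ i)^2)" by (simp add: frob2_eq sum.swap[of _ "UNIV::'k set"])
    also have "\<dots> = (\<Sum>i\<in>(UNIV::'r set). 1)"
      by (intro sum.cong refl) (simp add: P_def indicator_matrix_def if_distrib[of "\<lambda>x. x^2"] cong: if_cong)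
    finally show ?thesis by simp
  qed
  have frobF: "frob2 F = real CARD('n)"
  proof -
    have "frob2 F = (\<Sum>i\<in>UNIV. \<Sum>k\<in>UNIV. (F $ k $ i)^2)" by (simp add: frob2_eq sum.swap[of _ "UNIV::'k set"])
    also have "\<dots> = (\<Sum>i\<in>(UNIV::'n set). 1)"
      by (intro sum.cong refl) (simp add: F_def indicator_matrix_def if_distrib[of "\<lambda>x. x^2"] cong: if_cong)
    finally show ?thesis by simp
  qed
  define c where "c j = (\<Sum>i\<in>UNIV. (Wt $ i $ j)^2)" for j
  have frobW: "frob2 Wt = (\<Sum>j\<in>UNIV. c j)"
    by (simp add: frob2_eq c_def sum.swap[of _ "UNIV::'r set"])
  have rpos: "real CARD('r) > 0" and npos: "real CARD('n) > 0" by auto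
  have sr: "spectral_risk F Wt = real CARD('r) * (\<Sum>j\<in>UNIV. c j) / real CARD('n)"
    by (simp add: spectral_risk_def lsq FP[symmetric] frobP frobF frobW)
  have c_le: "c j \<le> 1" for j
  proof -
    have "c j \<le> (\<Sum>i\<in>UNIV. Wt $ i $ j)"
      unfolding c_def
    proof (rule sum_mono)
      fix i :: 'r
      have "Wt $ i $ j \<le> (\<Sum>i\<in>UNIV. Wt $ i $ j)"
        by (rule member_le_sum) (auto simp: Wt_nonneg)
      then have "Wt $ i $ j \<le> 1" using Wt_sum by simp
      then show "(Wt $ i $ j)^2 \<le> Wt $ i $ j"
        using Wt_nonneg[of i j] by (simp add: power2_eq_square mult_left_le)
    qed
    then show ?thesis using Wt_sum by simp
  qed
  define m where "m j = real (rk (lab j))" for j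
  have cardA: "real (card (A j)) = m j" for j by (simp add: m_def rk_def A_def)
  have mpos: "m j \<ge> 1" for j using rk_pos by (simp add: m_def)
  define d where "d j = (\<Sum>i\<in>A j. (Wt $ i $ j - 1 / m j)^2)" for j
  have c_id: "c j = 1 / m j + d j" for j
  proof -
    have cA: "c j = (\<Sum>i\<in>A j. (Wt $ i $ j)^2)"
      unfolding c_def by (rule sum.mono_neutral_right) (auto simp: A_def Wt_zero)
    have "d j = (\<Sum>i\<in>A j. (Wt $ i $ j)^2 - 2 / m j * Wt $ i $ j + 1 / (m j)^2)"
      unfolding d_def by (intro sum.cong refl) (simp add: power2_diff field_simps)
    also have "\<dots> = c j - 2 / m j * (\<Sum>i\<in>A j. Wt $ i $ j) + real (card (A j)) / (m j)^2"
      by (simp add: cA sum.distrib sum_subtractf sum_distrib_left)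
    also have "\<dots> = c j - 1 / m j"
      using Asum[of j] cardA[of j] mpos[of j] by (simp add: field_simps power2_eq_square)
    finally show ?thesis by simp
  qed
  have d_nonneg: "d j \<ge> 0" for j unfolding d_def by (rule sum_nonneg) simp
  have sumk: "(\<Sum>j\<in>UNIV. 1 / m j) = (\<Sum>k\<in>UNIV. real (nk k) / real (rk k))"
  proof -
    have "(\<Sum>j\<in>UNIV. 1 / m j) = (\<Sum>k\<in>UNIV. \<Sum>j\<in>{j\<in>UNIV. lab j = k}. 1 / m j)"
      by (rule sum.group[symmetric]) auto
    also have "\<dots> = (\<Sum>k\<in>UNIV. real (nk k) / real (rk k))"
    proof (intro sum.cong refl)
      fix k
      have "(\<Sum>j\<in>{j\<in>UNIV. lab j = k}. 1 / m j) = (\<Sum>j\<in>{j. lab j = k}. 1 / real (rk k))"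
        by (intro sum.cong) (auto simp: m_def)
      then show "(\<Sum>j\<in>{j\<in>UNIV. lab j = k}. 1 / m j) = real (nk k) / real (rk k)"
        by (simp add: nk_def)
    qed
    finally show ?thesis .
  qed
  define T where "T = (\<Sum>j\<in>UNIV. c j)"
  define S where "S = (\<Sum>j\<in>UNIV. 1 / m j)"
  have TS: "T = S + (\<Sum>j\<in>UNIV. d j)" by (simp add: T_def S_def c_id sum.distrib)
  have sr2: "spectral_risk F Wt = real CARD('r) * T / real CARD('n)" by (simp add: sr T_def)
  have lowS: "real CARD('r) / real CARD('n) * (\<Sum>k\<in>UNIV. real (nk k) / real (rk k)) = real CARD('r) * S / real CARD('n)"
    by (simp add: S_def sumk)
  have SleT: "S \<le> T" using TS d_nonneg by (simp add: sum_nonneg)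
  have Tle: "T \<le> real CARD('n)"
  proof -
    have "T \<le> (\<Sum>j\<in>(UNIV::'n set). 1)" unfolding T_def by (rule sum_mono) (rule c_le)
    then show ?thesis by simp
  qed
  have part2: "real CARD('r) / real CARD('n) * (\<Sum>k\<in>UNIV. real (nk k) / real (rk k)) \<le> spectral_risk F Wt"
    unfolding lowS sr2 using SleT rpos npos by (simp add: divide_right_mono)
  have part3: "spectral_risk F Wt \<le> real CARD('r)"
  proof -
    have "real CARD('r) * T \<le> real CARD('r) * real CARD('n)" using Tle rpos by simp
    then show ?thesis unfolding sr2 using npos by (simp add: divide_le_eq)
  qed
  have part4: "(\<forall>j. \<exists>!i. Wt $ i $ j \<noteq> 0) \<longrightarrow> spectral_risk F Wt = real CARD('r)"
  proof
    assume u: "\<forall>j. \<exists>!i. Wt $ i $ j \<noteq> 0"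
    have "c j = 1" for j
    proof -
      obtain i0 where i0: "\<And>i. i \<noteq> i0 \<Longrightarrow> Wt $ i $ j = 0" using u by metis
      have e: "(\<Sum>i\<in>UNIV. f i) = f i0" if "\<And>i. i \<noteq> i0 \<Longrightarrow> f i = 0" for f :: "'r \<Rightarrow> real"
      proof -
        have "(\<Sum>i\<in>UNIV. f i) = (\<Sum>i\<in>UNIV. if i = i0 then f i0 else 0)"
          by (rule sum.cong) (auto simp: that)
        then show ?thesis by simp
      qed
      have "Wt $ i0 $ j = 1" using Wt_sum[of j] e[of "\<lambda>i. Wt $ i $ j"] i0 by simp
      then show ?thesis unfolding c_def using e[of "\<lambda>i. (Wt $ i $ j)^2"] i0 by simp
    qed
    then have "T = real CARD('n)" by (simp add: T_def)
    then show "spectral_risk F Wt = real CARD('r)" using sr2 npos by simp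
  qed
  have eqiff: "spectral_risk F Wt = real CARD('r) / real CARD('n) * (\<Sum>k\<in>UNIV. real (nk k) / real (rk k))
      \<longleftrightarrow> (\<forall>j. d j = 0)"
  proof -
    have "spectral_risk F Wt = real CARD('r) / real CARD('n) * (\<Sum>k\<in>UNIV. real (nk k) / real (rk k))
       \<longleftrightarrow> T = S" unfolding lowS sr2 using rpos npos by (auto simp: divide_cancel_right)
    also have "\<dots> \<longleftrightarrow> (\<Sum>j\<in>UNIV. d j) = 0" using TS by auto
    also have "\<dots> \<longleftrightarrow> (\<forall>j. d j = 0)" using d_nonneg by (simp add: sum_nonneg_eq_0_iff)
    finally show ?thesis .
  qed
  have part5: "(\<forall>j. d j = 0) \<longleftrightarrow> (\<forall>k. rk k = 1)"
  proof
    assume all1: "\<forall>k. rk k = 1"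
    show "\<forall>j. d j = 0"
    proof
      fix j
      have "card (A j) = 1" using all1 by (simp add: A_def rk_def)
      then obtain i0 where Ai: "A j = {i0}" by (rule card_1_singletonE)
      have "m j = 1" using all1 by (simp add: m_def)
      moreover have "Wt $ i0 $ j = 1" using Asum[of j] Ai by simp
      ultimately show "d j = 0" by (simp add: d_def Ai)
    qed
  next
    assume d0: "\<forall>j. d j = 0"
    have unif: "Wt $ i $ j = 1 / m j" if "i \<in> A j" for i j
    proof -
      have "(\<Sum>i\<in>A j. (Wt $ i $ j - 1 / m j)^2) = 0" using d0 by (simp add: d_def)
      then have "\<forall>i\<in>A j. (Wt $ i $ j - 1 / m j)^2 = 0" by (simp add: sum_nonneg_eq_0_iff)
      then show ?thesis using that by simp
    qed
    show "\<forall>k. rk k = 1"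
    proof (rule ccontr)
      assume "\<not> (\<forall>k. rk k = 1)"
      then obtain k where k: "rk k \<noteq> 1" by blast
      define B where "B = {i. lab (g i) = k}"
      have cB: "card B \<ge> 2" using k rk_pos by (simp add: B_def rk_def) (metis One_nat_def Suc_1 Suc_leI le_neq_implies_less)
      then have "B \<noteq> {}" by auto
      then obtain i1 where i1: "i1 \<in> B" by blast
      have "card (B - {i1}) \<ge> 1" using cB i1 by simp
      then have "B - {i1} \<noteq> {}" by (metis card.empty not_one_le_zero)
      then obtain i2 where i2: "i2 \<in> B" "i2 \<noteq> i1" by blast
      have rows: "Wt $ i1 = Wt $ i2"
      proof (subst vec_eq_iff, rule allI)
        fix j
        show "Wt $ i1 $ j = Wt $ i2 $ j"
        proof (cases "lab j = k")
          case True
          then have "i1 \<in> A j" "i2 \<in> A j" using i1 i2 by (auto simp: A_def B_def)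
          then show ?thesis using unif by simp
        next
          case False
          then show ?thesis using i1 i2 Wt_zero by (auto simp: B_def)
        qed
      qed
      have ax: "transpose Wt *v axis i 1 = Wt $ i" for i
      proof -
        have "(\<Sum>l\<in>UNIV. Wt $ l $ j * axis i 1 $ l) = Wt $ i $ j" for j
        proof -
          have "(\<Sum>l\<in>UNIV. Wt $ l $ j * axis i 1 $ l) = (\<Sum>l\<in>UNIV. if l = i then Wt $ i $ j else 0)"
            by (rule sum.cong) (auto simp: axis_def)
          then show ?thesis by simp
        qed
        then show ?thesis by (simp add: vec_eq_iff matrix_vector_mult_def transpose_def del: transpose_matrix_vector)
      qed
      have "axis i1 (1::real) = axis i2 1" using injT rows by (metis ax injD)
      then have "axis i1 (1::real) $ i1 = axis i2 1 $ i1" by simp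
      then show False using i2 by (simp add: axis_def)
    qed
  qed
  show ?thesis using fit part2 part3 part4 eqiff part5 by blast
qed

end
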